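(* Let $\kappa$ be a regular cardinal and $M=\langle W,S\rangle$ a $\kappa$-downward directed multi-relational Kripke frame. Then $\theta_M:W\to\mathrm{At}(G(M))$, $\theta_M(w)=\{w\}$, is an isomorphism of multi-relational Kripke frames from $M$ to $F(G(M))$.
   Context: A multi-relational Kripke frame is a pair $\langle W,S\rangle$ with $W$ non-empty and $S$ a non-empty set of binary relations on $W$; it is $\kappa$-downward directed if for every $S'\subseteq S$ with $|S'|<\kappa$ there is $R\in S$ with $R\subseteq\bigcap S'$ (with $\bigcap\emptyset=W\times W$). A homomorphism $g:\langle W_1,S_1\rangle\to\langle W_2,S_2\rangle$ is a map $g:W_1\to W_2$ such that: (i) for every $x\in W_1$ and $R_2\in S_2$ there is $R_1\in S_1$ such that for all $y\in W_1$, $xR_1y$ implies $g(x)R_2g(y)$; (ii) for every $x\in W_1$ and $R_1\in S_1$ there is $R_2\in S_2$ such that for all $u\in W_2$, if $g(x)R_2u$ then there exists $y\in W_1$ with $xR_1y$ and $g(y)=u$. An isomorphism is a bijective homomorphism. $G(M)$ is the powerset Boolean algebra $\mathcal P(W)$ with $\Diamond_MX=\{w\mid\forall R\in S\ \exists x\in X\ (wRx)\}$; its atoms are the singletons. For a complete atomic modal algebra $A$, $F(A)=\langle\mathrm{At}(A),\{R(X)\mid X\subseteq A,|X|<\kappa\}\rangle$ with $a\,R(X)\,c\iff a\leq\bigwedge\{\Diamond x\mid x\in X,\ c\leq x\}$ (empty meet $=1$). *)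

theory Defs
  imports Main
begin

unbundle cardinal_syntax

definition kripke_frame :: "'a set \<Rightarrow> 'a rel set \<Rightarrow> bool" where
  "kripke_frame W S \<longleftrightarrow> W \<noteq> {} \<and> S \<noteq> {} \<and> (\<forall>R\<in>S. R \<subseteq> W \<times> W)"

text \<open>kappa-downward directedness; the cardinal kappa is a cardinal order k,
  and |S'| < kappa is ordLess of card_of; the empty intersection is W x W.\<close>
definition downward_directed :: "'k rel \<Rightarrow> 'a set \<Rightarrow> 'a rel set \<Rightarrow> bool" where
  "downward_directed k W S \<longleftrightarrow>
     (\<forall>S'. S' \<subseteq> S \<and> |S'| <o k \<longrightarrow> (\<exists>R\<in>S. R \<subseteq> (W \<times> W) \<inter> \<Inter>S'))"

definition frame_hom :: "'a set \<Rightarrow> 'a rel set \<Rightarrow> 'b set \<Rightarrow> 'b rel set \<Rightarrow> ('a \<Rightarrow> 'b) \<Rightarrow> bool" where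
  "frame_hom W1 S1 W2 S2 g \<longleftrightarrow>
     (\<forall>x\<in>W1. g x \<in> W2) \<and>
     (\<forall>x\<in>W1. \<forall>R2\<in>S2. \<exists>R1\<in>S1. \<forall>y\<in>W1. (x, y) \<in> R1 \<longrightarrow> (g x, g y) \<in> R2) \<and>
     (\<forall>x\<in>W1. \<forall>R1\<in>S1. \<exists>R2\<in>S2. \<forall>u\<in>W2. (g x, u) \<in> R2 \<longrightarrow> (\<exists>y\<in>W1. (x, y) \<in> R1 \<and> g y = u))"

definition frame_iso :: "'a set \<Rightarrow> 'a rel set \<Rightarrow> 'b set \<Rightarrow> 'b rel set \<Rightarrow> ('a \<Rightarrow> 'b) \<Rightarrow> bool" where
  "frame_iso W1 S1 W2 S2 g \<longleftrightarrow> frame_hom W1 S1 W2 S2 g \<and> bij_betw g W1 W2"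

text \<open>The complex algebra G(M): powerset algebra of W (order = inclusion, top = W)
  with the diamond operator below.\<close>
definition G_diamond :: "'a set \<Rightarrow> 'a rel set \<Rightarrow> 'a set \<Rightarrow> 'a set" where
  "G_diamond W S X = {w \<in> W. \<forall>R\<in>S. \<exists>x\<in>X. (w, x) \<in> R}"

definition G_atoms :: "'a set \<Rightarrow> 'a set set" where
  "G_atoms W = {a. a \<subseteq> W \<and> a \<noteq> {} \<and> (\<forall>b. b \<subseteq> a \<longrightarrow> b = {} \<or> b = a)}"

definition F_rel :: "'a set \<Rightarrow> 'a rel set \<Rightarrow> 'a set set \<Rightarrow> 'a set rel" where
  "F_rel W S X = {(a, c). a \<in> G_atoms W \<and> c \<in> G_atoms W \<and>
      a \<subseteq> W \<inter> \<Inter>{G_diamond W S x | x. x \<in> X \<and> c \<subseteq> x}}"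

definition F_rels :: "'k rel \<Rightarrow> 'a set \<Rightarrow> 'a rel set \<Rightarrow> 'a set rel set" where
  "F_rels k W S = {F_rel W S X | X. X \<subseteq> Pow W \<and> |X| <o k}"

end

theory Submission
  imports Defs
begin

lemma fin_less: assumes "Cinfinite k" "finite A" shows "|A| <o k"
  by (metis Cfinite_ordLess_Cinfinite Field_card_of assms card_of_Card_order cfinite_def)

lemma img_less: assumes "|A| <o k" "B \<subseteq> A" shows "|f ` B| <o k"
  by (meson assms card_of_image card_of_mono1 ordLeq_ordLess_trans)

lemma atoms_eq: "G_atoms W = (\<lambda>w. {w}) ` W"
proof
  show "G_atoms W \<subseteq> (\<lambda>w. {w}) ` W"
  proof
    fix a assume a: "a \<in> G_atoms W"
    then obtain w where w: "w \<in> a" unfolding G_atoms_def by auto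
    have "{w} = {} \<or> {w} = a" using a w unfolding G_atoms_def by auto
    hence "a = {w}" by auto
    thus "a \<in> (\<lambda>w. {w}) ` W" using a w unfolding G_atoms_def by auto
  qed
next
  show "(\<lambda>w. {w}) ` W \<subseteq> G_atoms W"
    unfolding G_atoms_def by (auto simp: subset_singleton_iff)
qed

theorem theorem9p4:
  fixes W :: "'a set" and S :: "'a rel set" and k :: "'k rel"
  assumes "Card_order k" and "Cinfinite k" and "regularCard k"
    and "kripke_frame W S"
    and "downward_directed k W S"
  shows "frame_iso W S (G_atoms W) (F_rels k W S) (\<lambda>w. {w})"
proof -
  have SW: "\<And>R. R \<in> S \<Longrightarrow> R \<subseteq> W \<times> W" using assms(4) unfolding kripke_frame_def by auto
  have bij: "bij_betw (\<lambda>w. {w}) W (G_atoms W)"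
    unfolding atoms_eq by (auto simp: bij_betw_def inj_on_def)
  have h1: "\<forall>x\<in>W. {x} \<in> G_atoms W" unfolding atoms_eq by auto
  have h2: "\<forall>x\<in>W. \<forall>R2\<in>F_rels k W S. \<exists>R1\<in>S. \<forall>y\<in>W. (x, y) \<in> R1 \<longrightarrow> ({x}, {y}) \<in> R2"
  proof (intro ballI)
    fix x R2 assume x: "x \<in> W" and R2: "R2 \<in> F_rels k W S"
    then obtain X where X: "X \<subseteq> Pow W" "|X| <o k" and R2eq: "R2 = F_rel W S X"
      unfolding F_rels_def by auto
    define B where "B = {x' \<in> X. x \<notin> G_diamond W S x'}"
    have "\<forall>x'\<in>B. \<exists>R\<in>S. \<forall>z\<in>x'. (x, z) \<notin> R"
      using x unfolding B_def G_diamond_def by auto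
    then obtain f where f: "\<And>x'. x' \<in> B \<Longrightarrow> f x' \<in> S \<and> (\<forall>z\<in>x'. (x, z) \<notin> f x')"
      by metis
    have "f ` B \<subseteq> S" using f by auto
    moreover have "|f ` B| <o k" by (rule img_less[OF X(2)]) (auto simp: B_def)
    ultimately obtain R1 where R1: "R1 \<in> S" "R1 \<subseteq> (W \<times> W) \<inter> \<Inter>(f ` B)"
      using assms(5) unfolding downward_directed_def by blast
    show "\<exists>R1\<in>S. \<forall>y\<in>W. (x, y) \<in> R1 \<longrightarrow> ({x}, {y}) \<in> R2"
    proof (intro bexI[OF _ R1(1)] ballI impI)
      fix y assume y: "y \<in> W" and xy: "(x, y) \<in> R1"
      have "x \<in> G_diamond W S x'" if "x' \<in> X" "y \<in> x'" for x'
      proof (rule ccontr)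
        assume "x \<notin> G_diamond W S x'"
        hence "x' \<in> B" using that unfolding B_def by auto
        hence "(x, y) \<in> f x'" using R1(2) xy by auto
        thus False using f[OF \<open>x' \<in> B\<close>] that by auto
      qed
      thus "({x}, {y}) \<in> R2" unfolding R2eq F_rel_def using h1 x y by auto
    qed
  qed
  have h3: "\<forall>x\<in>W. \<forall>R1\<in>S. \<exists>R2\<in>F_rels k W S. \<forall>u\<in>G_atoms W. ({x}, u) \<in> R2 \<longrightarrow> (\<exists>y\<in>W. (x, y) \<in> R1 \<and> {y} = u)"
  proof (intro ballI)
    fix x R1 assume x: "x \<in> W" and R1: "R1 \<in> S"
    define X where "X = {W - R1 `` {x}}"
    have "F_rel W S X \<in> F_rels k W S" unfolding F_rels_def X_def
      using fin_less[OF assms(2)] by blast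
    moreover have "\<forall>u\<in>G_atoms W. ({x}, u) \<in> F_rel W S X \<longrightarrow> (\<exists>y\<in>W. (x, y) \<in> R1 \<and> {y} = u)"
    proof (intro ballI impI)
      fix u assume u: "u \<in> G_atoms W" and xu: "({x}, u) \<in> F_rel W S X"
      then obtain y where y: "y \<in> W" "u = {y}" unfolding atoms_eq by auto
      have "(x, y) \<in> R1"
      proof (rule ccontr)
        assume n: "(x, y) \<notin> R1"
        hence "x \<in> G_diamond W S (W - R1 `` {x})"
          using xu y unfolding F_rel_def X_def by auto
        thus False using R1 unfolding G_diamond_def by auto
      qed
      thus "\<exists>y\<in>W. (x, y) \<in> R1 \<and> {y} = u" using y by auto
    qed
    ultimately show "\<exists>R2\<in>F_rels k W S. \<forall>u\<in>G_atoms W. ({x}, u) \<in> R2 \<longrightarrow> (\<exists>y\<in>W. (x, y) \<in> R1 \<and> {y} = u)"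
      by blast
  qed
  show ?thesis unfolding frame_iso_def frame_hom_def using bij h1 h2 h3 by blast
qed

end
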